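(* Let $\mathbb{K}=(G,M,I)$ be a formal context and let ${\downarrow}\operatorname{Ext}(\mathbb{K})$ be the lattice of all closure systems on $G$ contained in $\operatorname{Ext}(\mathbb{K})$, ordered by inclusion. Then ${\downarrow}\operatorname{Ext}(\mathbb{K})$ (i) is join-semidistributive, (ii) is lower semi-modular, (iii) is meet-distributive, (iv) is join-pseudocomplemented, (v) is ranked, and (vi) is atomistic.
   Context: A formal context is a triple $(G,M,I)$ with finite nonempty sets $G$, $M$ and $I\subseteq G\times M$; derivations $A'=\{m\mid\forall a\in A:(a,m)\in I\}$, $B'=\{g\mid\forall b\in B:(g,b)\in I\}$; $\operatorname{Ext}(\mathbb{K})=\{A\subseteq G\mid A''=A\}$. A closure system on $G$ is a family of subsets of $G$ containing $G$ and closed under intersections; in ${\downarrow}\operatorname{Ext}(\mathbb{K})$ meet is intersection and join is the generated closure system. For a lattice $(L,\le)$ with cover relation $\prec$: $L$ is lower semi-modular iff for all $x,y$: $x\prec x\vee y$ implies $x\wedge y\prec y$; join-semidistributive iff $x\vee y=x\vee z$ implies $x\vee y=x\vee(y\wedge z)$; meet-distributive iff it is join-semidistributive and lower semi-modular; join-pseudocomplemented iff for every $x$ the set $\{y\in L\mid y\vee x=\top\}$ has a least element; ranked iff there is $\rho:L\to\mathbb{N}$ with $x\prec y\Rightarrow\rho(x)+1=\rho(y)$; atomistic iff every element is a join of atoms. *)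

theory Defs
  imports Main
begin

definition formal_context :: "'g set \<Rightarrow> 'm set \<Rightarrow> ('g \<times> 'm) set \<Rightarrow> bool" where
  "formal_context G M I \<longleftrightarrow> finite G \<and> finite M \<and> G \<noteq> {} \<and> M \<noteq> {} \<and> I \<subseteq> G \<times> M"

definition intent :: "'g set \<Rightarrow> 'm set \<Rightarrow> ('g \<times> 'm) set \<Rightarrow> 'g set \<Rightarrow> 'm set" where
  "intent G M I A = {m \<in> M. \<forall>a\<in>A. (a, m) \<in> I}"

definition extent :: "'g set \<Rightarrow> 'm set \<Rightarrow> ('g \<times> 'm) set \<Rightarrow> 'm set \<Rightarrow> 'g set" where
  "extent G M I B = {g \<in> G. \<forall>b\<in>B. (g, b) \<in> I}"

definition Ext :: "'g set \<Rightarrow> 'm set \<Rightarrow> ('g \<times> 'm) set \<Rightarrow> 'g set set" where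
  "Ext G M I = {A. A \<subseteq> G \<and> extent G M I (intent G M I A) = A}"

definition closure_system :: "'g set \<Rightarrow> 'g set set \<Rightarrow> bool" where
  "closure_system G F \<longleftrightarrow> F \<subseteq> Pow G \<and> G \<in> F \<and> (\<forall>X. X \<subseteq> F \<and> X \<noteq> {} \<longrightarrow> \<Inter>X \<in> F)"

definition downExt :: "'g set \<Rightarrow> 'm set \<Rightarrow> ('g \<times> 'm) set \<Rightarrow> 'g set set set" where
  "downExt G M I = {F. closure_system G F \<and> F \<subseteq> Ext G M I}"

definition is_lub :: "'b set \<Rightarrow> ('b \<Rightarrow> 'b \<Rightarrow> bool) \<Rightarrow> 'b set \<Rightarrow> 'b \<Rightarrow> bool" where
  "is_lub L le A x \<longleftrightarrow> x \<in> L \<and> (\<forall>a\<in>A. le a x) \<and> (\<forall>y\<in>L. (\<forall>a\<in>A. le a y) \<longrightarrow> le x y)"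

definition is_glb :: "'b set \<Rightarrow> ('b \<Rightarrow> 'b \<Rightarrow> bool) \<Rightarrow> 'b set \<Rightarrow> 'b \<Rightarrow> bool" where
  "is_glb L le A x \<longleftrightarrow> x \<in> L \<and> (\<forall>a\<in>A. le x a) \<and> (\<forall>y\<in>L. (\<forall>a\<in>A. le y a) \<longrightarrow> le y x)"

definition ljoin :: "'b set \<Rightarrow> ('b \<Rightarrow> 'b \<Rightarrow> bool) \<Rightarrow> 'b \<Rightarrow> 'b \<Rightarrow> 'b" where
  "ljoin L le x y = (THE z. is_lub L le {x, y} z)"

definition lmeet :: "'b set \<Rightarrow> ('b \<Rightarrow> 'b \<Rightarrow> bool) \<Rightarrow> 'b \<Rightarrow> 'b \<Rightarrow> 'b" where
  "lmeet L le x y = (THE z. is_glb L le {x, y} z)"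

definition ltop :: "'b set \<Rightarrow> ('b \<Rightarrow> 'b \<Rightarrow> bool) \<Rightarrow> 'b" where
  "ltop L le = (THE t. t \<in> L \<and> (\<forall>y\<in>L. le y t))"

definition lbot :: "'b set \<Rightarrow> ('b \<Rightarrow> 'b \<Rightarrow> bool) \<Rightarrow> 'b" where
  "lbot L le = (THE b. b \<in> L \<and> (\<forall>y\<in>L. le b y))"

definition lcovers :: "'b set \<Rightarrow> ('b \<Rightarrow> 'b \<Rightarrow> bool) \<Rightarrow> 'b \<Rightarrow> 'b \<Rightarrow> bool" where
  "lcovers L le x y \<longleftrightarrow> x \<in> L \<and> y \<in> L \<and> le x y \<and> x \<noteq> y \<and>
     \<not> (\<exists>z\<in>L. le x z \<and> le z y \<and> z \<noteq> x \<and> z \<noteq> y)"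

definition lower_semimodular :: "'b set \<Rightarrow> ('b \<Rightarrow> 'b \<Rightarrow> bool) \<Rightarrow> bool" where
  "lower_semimodular L le \<longleftrightarrow> (\<forall>x\<in>L. \<forall>y\<in>L.
     lcovers L le x (ljoin L le x y) \<longrightarrow> lcovers L le (lmeet L le x y) y)"

definition join_semidistributive :: "'b set \<Rightarrow> ('b \<Rightarrow> 'b \<Rightarrow> bool) \<Rightarrow> bool" where
  "join_semidistributive L le \<longleftrightarrow> (\<forall>x\<in>L. \<forall>y\<in>L. \<forall>z\<in>L.
     ljoin L le x y = ljoin L le x z \<longrightarrow> ljoin L le x y = ljoin L le x (lmeet L le y z))"

definition meet_distributive :: "'b set \<Rightarrow> ('b \<Rightarrow> 'b \<Rightarrow> bool) \<Rightarrow> bool" where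
  "meet_distributive L le \<longleftrightarrow> join_semidistributive L le \<and> lower_semimodular L le"

definition join_pseudocomplemented :: "'b set \<Rightarrow> ('b \<Rightarrow> 'b \<Rightarrow> bool) \<Rightarrow> bool" where
  "join_pseudocomplemented L le \<longleftrightarrow> (\<forall>x\<in>L. \<exists>y. y \<in> L \<and> ljoin L le y x = ltop L le \<and>
     (\<forall>z\<in>L. ljoin L le z x = ltop L le \<longrightarrow> le y z))"

definition ranked :: "'b set \<Rightarrow> ('b \<Rightarrow> 'b \<Rightarrow> bool) \<Rightarrow> bool" where
  "ranked L le \<longleftrightarrow> (\<exists>\<rho> :: 'b \<Rightarrow> nat. \<forall>x y. lcovers L le x y \<longrightarrow> \<rho> x + 1 = \<rho> y)"

definition atoms :: "'b set \<Rightarrow> ('b \<Rightarrow> 'b \<Rightarrow> bool) \<Rightarrow> 'b set" where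
  "atoms L le = {a. lcovers L le (lbot L le) a}"

definition atomistic :: "'b set \<Rightarrow> ('b \<Rightarrow> 'b \<Rightarrow> bool) \<Rightarrow> bool" where
  "atomistic L le \<longleftrightarrow> (\<forall>x\<in>L. \<exists>A. A \<subseteq> atoms L le \<and> is_lub L le A x)"

end

theory Submission
  imports Defs
begin

lemma lub_unique: assumes "is_lub L (\<subseteq>) A x" "is_lub L (\<subseteq>) A y" shows "x = y"
proof -
  have "x \<subseteq> y" using assms unfolding is_lub_def by simp
  moreover have "y \<subseteq> x" using assms unfolding is_lub_def by simp
  ultimately show ?thesis by (rule subset_antisym)
qed

lemma glb_unique: assumes "is_glb L (\<subseteq>) A x" "is_glb L (\<subseteq>) A y" shows "x = y"
proof -
  have "x \<subseteq> y" using assms unfolding is_glb_def by simp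
  moreover have "y \<subseteq> x" using assms unfolding is_glb_def by simp
  ultimately show ?thesis by (rule subset_antisym)
qed

lemma ljoin_eq: assumes "is_lub L (\<subseteq>) {x, y} z" shows "ljoin L (\<subseteq>) x y = z"
  unfolding ljoin_def by (rule the_equality[where P="is_lub L (\<subseteq>) {x, y}", OF assms]) (rule lub_unique[OF _ assms])

lemma lmeet_eq: assumes "is_glb L (\<subseteq>) {x, y} z" shows "lmeet L (\<subseteq>) x y = z"
  unfolding lmeet_def by (rule the_equality[where P="is_glb L (\<subseteq>) {x, y}", OF assms]) (rule glb_unique[OF _ assms])

lemma ltop_eq: assumes "t \<in> L" "\<forall>y\<in>L. y \<subseteq> t" shows "ltop L (\<subseteq>) = t"
  unfolding ltop_def
proof (rule the_equality)
  show "t \<in> L \<and> (\<forall>y\<in>L. y \<subseteq> t)" using assms by simp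
  fix t' assume "t' \<in> L \<and> (\<forall>y\<in>L. y \<subseteq> t')"
  then show "t' = t" using assms by (meson subset_antisym)
qed

lemma lbot_eq: assumes "t \<in> L" "\<forall>y\<in>L. t \<subseteq> y" shows "lbot L (\<subseteq>) = t"
  unfolding lbot_def
proof (rule the_equality)
  show "t \<in> L \<and> (\<forall>y\<in>L. t \<subseteq> y)" using assms by simp
  fix t' assume "t' \<in> L \<and> (\<forall>y\<in>L. t' \<subseteq> y)"
  then show "t' = t" using assms by (meson subset_antisym)
qed

locale fc =
  fixes G :: "'g set" and M :: "'m set" and I :: "('g \<times> 'm) set"
  assumes fc: "formal_context G M I"
begin

abbreviation "L \<equiv> downExt G M I"
abbreviation "E \<equiv> Ext G M I"

lemma finG: "finite G" using fc unfolding formal_context_def by auto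

lemma Ext_sub: "E \<subseteq> Pow G" unfolding Ext_def by auto

lemma G_Ext: "G \<in> E"
  unfolding Ext_def extent_def intent_def by auto

lemma Ext_int: assumes "A \<in> E" "B \<in> E" shows "A \<inter> B \<in> E"
proof -
  have a: "A \<subseteq> G" "extent G M I (intent G M I A) = A" using assms unfolding Ext_def by auto
  have b: "B \<subseteq> G" "extent G M I (intent G M I B) = B" using assms unfolding Ext_def by auto
  have "extent G M I (intent G M I (A \<inter> B)) \<subseteq> A"
    using a unfolding extent_def intent_def by blast
  moreover have "extent G M I (intent G M I (A \<inter> B)) \<subseteq> B"
    using b unfolding extent_def intent_def by blast
  moreover have "A \<inter> B \<subseteq> extent G M I (intent G M I (A \<inter> B))"
    using a unfolding extent_def intent_def by blast
  ultimately show ?thesis using a unfolding Ext_def by auto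
qed

lemma cs_iff: "closure_system G F \<longleftrightarrow> F \<subseteq> Pow G \<and> G \<in> F \<and> (\<forall>A\<in>F. \<forall>B\<in>F. A \<inter> B \<in> F)"
proof
  assume "closure_system G F"
  then show "F \<subseteq> Pow G \<and> G \<in> F \<and> (\<forall>A\<in>F. \<forall>B\<in>F. A \<inter> B \<in> F)"
  proof (intro conjI ballI)
    fix A B assume ab: "A \<in> F" "B \<in> F"
    have "\<Inter>{A, B} \<in> F" using \<open>closure_system G F\<close> ab unfolding closure_system_def
      by (metis empty_not_insert empty_subsetI insert_subset)
    then show "A \<inter> B \<in> F" by simp
  qed (use \<open>closure_system G F\<close> in \<open>auto simp: closure_system_def\<close>)
next
  assume h: "F \<subseteq> Pow G \<and> G \<in> F \<and> (\<forall>A\<in>F. \<forall>B\<in>F. A \<inter> B \<in> F)"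
  have "\<Inter>X \<in> F" if "X \<subseteq> F" "X \<noteq> {}" for X
  proof -
    have "finite X" using that h finG by (meson finite_Pow_iff finite_subset)
    show ?thesis using \<open>finite X\<close> \<open>X \<noteq> {}\<close> \<open>X \<subseteq> F\<close>
    proof (induction X rule: finite_ne_induct)
      case (singleton x) then show ?case by auto
    next
      case (insert x F') then show ?case using h by auto
    qed
  qed
  then show "closure_system G F" using h unfolding closure_system_def by blast
qed

lemma L_iff: "F \<in> L \<longleftrightarrow> F \<subseteq> E \<and> G \<in> F \<and> (\<forall>A\<in>F. \<forall>B\<in>F. A \<inter> B \<in> F)"
proof
  assume "F \<in> L"
  then show "F \<subseteq> E \<and> G \<in> F \<and> (\<forall>A\<in>F. \<forall>B\<in>F. A \<inter> B \<in> F)"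
    by (simp add: downExt_def cs_iff)
next
  assume h: "F \<subseteq> E \<and> G \<in> F \<and> (\<forall>A\<in>F. \<forall>B\<in>F. A \<inter> B \<in> F)"
  then have "F \<subseteq> Pow G" using Ext_sub by (meson subset_trans)
  with h show "F \<in> L" by (simp add: downExt_def cs_iff)
qed

lemma LE: "F \<in> L \<Longrightarrow> F \<subseteq> E" using L_iff by simp
lemma LG: "F \<in> L \<Longrightarrow> G \<in> F" using L_iff by simp
lemma LI: "F \<in> L \<Longrightarrow> A \<in> F \<Longrightarrow> B \<in> F \<Longrightarrow> A \<inter> B \<in> F"
  using L_iff by simp
lemma LintroI: "F \<subseteq> E \<Longrightarrow> G \<in> F \<Longrightarrow> (\<And>A B. A \<in> F \<Longrightarrow> B \<in> F \<Longrightarrow> A \<inter> B \<in> F) \<Longrightarrow> F \<in> L"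
  using L_iff by simp
lemma LsubG: "F \<in> L \<Longrightarrow> A \<in> F \<Longrightarrow> A \<subseteq> G"
  using LE Ext_sub by blast

lemma Ext_L: "E \<in> L" using G_Ext Ext_int by (intro LintroI) auto

lemma bot_L: "{G} \<in> L" using G_Ext by (intro LintroI) auto

lemma L_fin: "F \<in> L \<Longrightarrow> finite F"
  using LE Ext_sub finG by (meson finite_Pow_iff finite_subset)

lemma L_Inter: assumes "F \<in> L" "Q \<subseteq> F" shows "G \<inter> \<Inter>Q \<in> F"
proof -
  have "closure_system G F" using assms unfolding downExt_def by auto
  moreover have "G \<in> F" using assms LG by auto
  then have "insert G Q \<subseteq> F" using assms by simp
  moreover have "\<forall>X. X \<subseteq> F \<and> X \<noteq> {} \<longrightarrow> \<Inter>X \<in> F"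
    using \<open>closure_system G F\<close> unfolding closure_system_def by simp
  ultimately have "\<Inter>(insert G Q) \<in> F" by blast
  then show ?thesis by simp
qed

definition J :: "'g set set \<Rightarrow> 'g set set \<Rightarrow> 'g set set" where
  "J F H = {C. \<exists>A\<in>F. \<exists>B\<in>H. C = A \<inter> B}"

lemma J_I: "A \<in> F \<Longrightarrow> B \<in> H \<Longrightarrow> C = A \<inter> B \<Longrightarrow> C \<in> J F H"
  unfolding J_def by blast

lemma J_L: assumes "F \<in> L" "H \<in> L" shows "J F H \<in> L"
proof -
  have F: "F \<subseteq> E" "G \<in> F" "\<forall>A\<in>F. \<forall>B\<in>F. A \<inter> B \<in> F" using assms(1) L_iff by simp_all
  have H: "H \<subseteq> E" "G \<in> H" "\<forall>A\<in>H. \<forall>B\<in>H. A \<inter> B \<in> H" using assms(2) L_iff by simp_all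
  have "J F H \<subseteq> E"
  proof
    fix C assume "C \<in> J F H"
    then obtain A B where "A \<in> F" "B \<in> H" "C = A \<inter> B" unfolding J_def by blast
    then show "C \<in> E" using F(1) H(1) Ext_int[of A B] by blast
  qed
  moreover have "G \<in> J F H" unfolding J_def using F(2) H(2) by auto
  moreover have "\<forall>A\<in>J F H. \<forall>B\<in>J F H. A \<inter> B \<in> J F H"
  proof (intro ballI)
    fix X Y assume "X \<in> J F H" "Y \<in> J F H"
    then obtain A B A' B' where ab: "A \<in> F" "B \<in> H" "A' \<in> F" "B' \<in> H" "X = A \<inter> B" "Y = A' \<inter> B'"
      unfolding J_def by blast
    have "X \<inter> Y = (A \<inter> A') \<inter> (B \<inter> B')" using ab by auto
    moreover have "A \<inter> A' \<in> F" "B \<inter> B' \<in> H" using ab F(3) H(3) by auto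
    ultimately show "X \<inter> Y \<in> J F H" unfolding J_def by blast
  qed
  ultimately show ?thesis by (intro LintroI) auto
qed

lemma J_sup1: assumes "F \<in> L" "H \<in> L" shows "F \<subseteq> J F H"
proof
  fix A assume A: "A \<in> F"
  have "A = A \<inter> G" using LsubG[OF assms(1) A] by auto
  then show "A \<in> J F H" unfolding J_def using A LG[OF assms(2)] by blast
qed

lemma J_sup2: assumes "F \<in> L" "H \<in> L" shows "H \<subseteq> J F H"
proof
  fix A assume A: "A \<in> H"
  have "A = G \<inter> A" using LsubG[OF assms(2) A] by auto
  then show "A \<in> J F H" unfolding J_def using A LG[OF assms(1)] by blast
qed

lemma ljoin_J: assumes "F \<in> L" "H \<in> L" shows "ljoin L (\<subseteq>) F H = J F H"
proof (rule ljoin_eq)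
  show "is_lub L (\<subseteq>) {F, H} (J F H)"
  proof -
    have "J F H \<subseteq> K" if "K \<in> L" "F \<subseteq> K" "H \<subseteq> K" for K
    proof
      fix C assume "C \<in> J F H"
      then obtain A B where "A \<in> F" "B \<in> H" "C = A \<inter> B" unfolding J_def by blast
      then show "C \<in> K" using that LI[of K A B] by blast
    qed
    then show ?thesis
      unfolding is_lub_def
    proof (intro conjI ballI impI)
      show "J F H \<in> L" by (rule J_L[OF assms])
    next
      fix a assume "a \<in> {F, H}"
      then show "a \<subseteq> J F H" using J_sup1[OF assms] J_sup2[OF assms] by auto
    next
      fix K assume "K \<in> L" "\<forall>a\<in>{F, H}. a \<subseteq> K"
      moreover assume "\<And>K. K \<in> L \<Longrightarrow> F \<subseteq> K \<Longrightarrow> H \<subseteq> K \<Longrightarrow> J F H \<subseteq> K"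
      ultimately show "J F H \<subseteq> K" by simp
    qed
  qed
qed

lemma lmeet_int: assumes "F \<in> L" "H \<in> L" shows "lmeet L (\<subseteq>) F H = F \<inter> H"
proof (rule lmeet_eq)
  have "F \<inter> H \<in> L" using assms LE LG LI by (intro LintroI) blast+
  then show "is_glb L (\<subseteq>) {F, H} (F \<inter> H)"
    unfolding is_glb_def by blast
qed

lemma ltop_E: "ltop L (\<subseteq>) = E"
  using Ext_L LE by (intro ltop_eq) auto

lemma lbot_G: "lbot L (\<subseteq>) = {G}"
  using bot_L LG by (intro lbot_eq) auto

lemma cover_insert:
  assumes "lcovers L (\<subseteq>) F H"
  shows "\<exists>A. A \<notin> F \<and> H = insert A F"
proof -
  have FH: "F \<in> L" "H \<in> L" "F \<subseteq> H" "F \<noteq> H" using assms unfolding lcovers_def by auto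
  have "finite (H - F)" using L_fin FH by auto
  moreover have "H - F \<noteq> {}" using FH by auto
  ultimately obtain A where A: "A \<in> H - F" and Amin: "\<forall>b\<in>H - F. b \<subseteq> A \<longrightarrow> A = b"
    using finite_has_minimal by blast
  have "insert A F \<in> L"
  proof -
    have "insert A F \<subseteq> E" using FH A LE by auto
    moreover have "G \<in> insert A F" using FH LG by auto
    moreover have "\<forall>X\<in>insert A F. \<forall>Y\<in>insert A F. X \<inter> Y \<in> insert A F"
    proof (intro ballI)
      fix X Y assume X: "X \<in> insert A F" and Y: "Y \<in> insert A F"
      have "X \<in> H" "Y \<in> H" using X Y A FH by auto
      then have XY: "X \<inter> Y \<in> H" using LI[OF FH(2)] by blast
      show "X \<inter> Y \<in> insert A F"
      proof (cases "X \<inter> Y \<in> F")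
        case False
        then have "X = A \<or> Y = A" using X Y LI[OF FH(1)] by blast
        then have "X \<inter> Y \<subseteq> A" by auto
        then have "A = X \<inter> Y" using Amin XY False by blast
        then show ?thesis by simp
      qed simp
    qed
    ultimately show ?thesis by (intro LintroI) auto
  qed
  moreover have "F \<subseteq> insert A F" "insert A F \<subseteq> H" "insert A F \<noteq> F" using A FH by auto
  ultimately have "H = insert A F" using assms unfolding lcovers_def by blast
  then show ?thesis using A by blast
qed

lemma cover_intro:
  assumes "F \<in> L" "H \<in> L" "F \<subseteq> H" "A \<in> H" "H - {A} \<subseteq> F" "A \<notin> F"
  shows "lcovers L (\<subseteq>) F H"
  unfolding lcovers_def using assms by blast

lemma ranked_L: "ranked L (\<subseteq>)"
  unfolding ranked_def
proof (intro exI allI impI)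
  fix F H assume c: "lcovers L (\<subseteq>) F H"
  then obtain A where "A \<notin> F" "H = insert A F" using cover_insert by blast
  moreover have "finite F" using c L_fin unfolding lcovers_def by auto
  ultimately show "card F + 1 = card H" by simp
qed

lemma J_mono: "H \<subseteq> H' \<Longrightarrow> J F H \<subseteq> J F H'"
  unfolding J_def by blast

lemma lsm_L: "lower_semimodular L (\<subseteq>)"
  unfolding lower_semimodular_def
proof (intro ballI impI)
  fix x y assume x: "x \<in> L" and y: "y \<in> L" and c: "lcovers L (\<subseteq>) x (ljoin L (\<subseteq>) x y)"
  have c': "lcovers L (\<subseteq>) x (J x y)" using c ljoin_J[OF x y] by simp
  then obtain A where A: "A \<notin> x" "J x y = insert A x" using cover_insert by blast
  have "A \<in> y"
  proof (rule ccontr)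
    assume "A \<notin> y"
    then have "y \<subseteq> x" using J_sup2[OF x y] A by auto
    then have "J x y \<subseteq> x" using LI[OF x] unfolding J_def by blast
    then show False using A by auto
  qed
  moreover have "y - {A} \<subseteq> x \<inter> y" using J_sup2[OF x y] A by auto
  moreover have "x \<inter> y \<in> L" using x y LE LG LI by (intro LintroI) blast+
  ultimately have "lcovers L (\<subseteq>) (x \<inter> y) y"
    using y A by (intro cover_intro) auto
  then show "lcovers L (\<subseteq>) (lmeet L (\<subseteq>) x y) y" using lmeet_int[OF x y] by simp
qed

lemma jsd_L: "join_semidistributive L (\<subseteq>)"
  unfolding join_semidistributive_def
proof (intro ballI impI)
  fix x y z assume x: "x \<in> L" and y: "y \<in> L" and z: "z \<in> L"
    and eq0: "ljoin L (\<subseteq>) x y = ljoin L (\<subseteq>) x z"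
  have eq: "J x y = J x z" using eq0 ljoin_J x y z by simp
  have yz: "y \<inter> z \<in> L" using y z LE LG LI by (intro LintroI) blast+
  have key: "\<forall>C. card (G - C) = n \<longrightarrow> C \<in> J x y \<longrightarrow> C \<in> J x (y \<inter> z)" for n
  proof (induction n rule: less_induct)
    case (less n)
    show ?case
    proof (intro allI impI)
      fix C assume n: "card (G - C) = n" and C: "C \<in> J x y"
      obtain A B where AB: "A \<in> x" "B \<in> y" "C = A \<inter> B" using C unfolding J_def by blast
      have Cz: "C \<in> J x z" using C eq by simp
      obtain A' D where AD: "A' \<in> x" "D \<in> z" "C = A' \<inter> D" using Cz unfolding J_def by blast
      have BG: "B \<subseteq> G" "D \<subseteq> G" using LsubG[OF y AB(2)] LsubG[OF z AD(2)] by auto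
      show "C \<in> J x (y \<inter> z)"
      proof (cases "B = C")
        case False
        then have "C \<subset> B" using AB by auto
        then have "G - B \<subset> G - C" using BG by auto
        then have lt: "card (G - B) < n" using n finG psubset_card_mono[of "G - C" "G - B"] by auto
        have "B \<in> J x y" using J_sup2[OF x y] AB by auto
        then have "B \<in> J x (y \<inter> z)" using less.IH[OF lt] by simp
        then obtain A2 E2 where "A2 \<in> x" "E2 \<in> y \<inter> z" "B = A2 \<inter> E2" unfolding J_def by blast
        moreover have "C = (A \<inter> A2) \<inter> E2" using AB calculation by auto
        moreover have "A \<inter> A2 \<in> x" using LI[OF x AB(1)] calculation by blast
        ultimately show ?thesis by (intro J_I) auto
      next
        case BC: True
        show ?thesis
        proof (cases "D = C")
          case False
          then have "C \<subset> D" using AD by auto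
          then have "G - D \<subset> G - C" using BG by auto
          then have lt: "card (G - D) < n" using n finG psubset_card_mono[of "G - C" "G - D"] by auto
          have "D \<in> J x y" using J_sup2[OF x z] AD eq by auto
          then have "D \<in> J x (y \<inter> z)" using less.IH[OF lt] by simp
          then obtain A2 E2 where "A2 \<in> x" "E2 \<in> y \<inter> z" "D = A2 \<inter> E2" unfolding J_def by blast
          moreover have "C = (A' \<inter> A2) \<inter> E2" using AD calculation by auto
          moreover have "A' \<inter> A2 \<in> x" using LI[OF x AD(1)] calculation by blast
          ultimately show ?thesis by (intro J_I) auto
        next
          case True
          then have "C \<in> y \<inter> z" using BC AB(2) AD(2) by simp
          then show ?thesis using J_sup2[OF x yz] by auto
        qed
      qed
    qed
  qed
  have "J x y \<subseteq> J x (y \<inter> z)"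
  proof
    fix C assume "C \<in> J x y"
    then show "C \<in> J x (y \<inter> z)" using key[of "card (G - C)"] by simp
  qed
  then have "J x y = J x (y \<inter> z)"
    using J_mono[of "y \<inter> z" y x] by (intro subset_antisym) auto
  then show "ljoin L (\<subseteq>) x y = ljoin L (\<subseteq>) x (lmeet L (\<subseteq>) y z)"
    using ljoin_J x y yz lmeet_int[OF y z] by simp
qed

lemma atomistic_L: "atomistic L (\<subseteq>)"
  unfolding atomistic_def
proof (intro ballI)
  fix F assume F: "F \<in> L"
  let ?A = "{{G, X} | X. X \<in> F \<and> X \<noteq> G}"
  have "?A \<subseteq> atoms L (\<subseteq>)"
  proof
    fix a assume "a \<in> ?A"
    then obtain X where X: "a = {G, X}" "X \<in> F" "X \<noteq> G" by blast
    have "X \<in> E" using X F LE by auto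
    moreover have "X \<subseteq> G" using \<open>X \<in> E\<close> Ext_sub by auto
    ultimately have "{G, X} \<in> L" using G_Ext by (intro LintroI) (auto simp: Int_absorb1 Int_absorb2)
    then have "lcovers L (\<subseteq>) {G} {G, X}"
      using X bot_L by (intro cover_intro[where A = X]) auto
    then show "a \<in> atoms L (\<subseteq>)" unfolding atoms_def lbot_G X by simp
  qed
  moreover have "is_lub L (\<subseteq>) ?A F"
  proof -
    have "K \<supseteq> F" if "K \<in> L" "\<forall>a\<in>?A. a \<subseteq> K" for K
    proof
      fix X assume "X \<in> F"
      then show "X \<in> K" using that LG[OF that(1)] by (cases "X = G") auto
    qed
    moreover have "\<forall>a\<in>?A. a \<subseteq> F" using LG[OF F] by auto
    ultimately show ?thesis unfolding is_lub_def using F by blast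
  qed
  ultimately show "\<exists>A. A \<subseteq> atoms L (\<subseteq>) \<and> is_lub L (\<subseteq>) A F" by blast
qed

definition Irr :: "'g set set" where
  "Irr = {Q \<in> E. Q \<noteq> G \<and> \<not> (\<exists>B\<in>E. \<exists>C\<in>E. Q \<subset> B \<and> Q \<subset> C \<and> Q = B \<inter> C)}"

lemma Irr_rep: "A \<in> E \<Longrightarrow> A = G \<inter> \<Inter>{Q \<in> Irr. A \<subseteq> Q}"
proof (induction "card (G - A)" arbitrary: A rule: less_induct)
  case less
  have AG: "A \<subseteq> G" using less.prems Ext_sub by auto
  show ?case
  proof (cases "A = G \<or> A \<in> Irr")
    case True
    then show ?thesis using AG by auto
  next
    case False
    then obtain B C where BC: "B \<in> E" "C \<in> E" "A \<subset> B" "A \<subset> C" "A = B \<inter> C"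
      using less.prems unfolding Irr_def by blast
    have "B \<subseteq> G" "C \<subseteq> G" using BC Ext_sub by auto
    then have "G - B \<subset> G - A" "G - C \<subset> G - A" using BC by auto
    then have lt: "card (G - B) < card (G - A)" "card (G - C) < card (G - A)"
      using finG psubset_card_mono[of "G - A" "G - B"] psubset_card_mono[of "G - A" "G - C"] by auto
    have rB: "B = G \<inter> \<Inter>{Q \<in> Irr. B \<subseteq> Q}" by (rule less.hyps[OF lt(1) BC(1)])
    have rC: "C = G \<inter> \<Inter>{Q \<in> Irr. C \<subseteq> Q}" by (rule less.hyps[OF lt(2) BC(2)])
    have sB: "{Q \<in> Irr. B \<subseteq> Q} \<subseteq> {Q \<in> Irr. A \<subseteq> Q}" using BC(3) by auto
    have sC: "{Q \<in> Irr. C \<subseteq> Q} \<subseteq> {Q \<in> Irr. A \<subseteq> Q}" using BC(4) by auto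
    have "G \<inter> \<Inter>{Q \<in> Irr. A \<subseteq> Q} \<subseteq> G \<inter> \<Inter>{Q \<in> Irr. B \<subseteq> Q}"
      using Inter_anti_mono[OF sB] by auto
    also have "\<dots> = B" using rB by simp
    finally have 1: "G \<inter> \<Inter>{Q \<in> Irr. A \<subseteq> Q} \<subseteq> B" .
    have "G \<inter> \<Inter>{Q \<in> Irr. A \<subseteq> Q} \<subseteq> G \<inter> \<Inter>{Q \<in> Irr. C \<subseteq> Q}"
      using Inter_anti_mono[OF sC] by auto
    also have "\<dots> = C" using rC by simp
    finally have 2: "G \<inter> \<Inter>{Q \<in> Irr. A \<subseteq> Q} \<subseteq> C" .
    have "G \<inter> \<Inter>{Q \<in> Irr. A \<subseteq> Q} \<subseteq> A" using 1 2 BC(5) by simp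
    moreover have "A \<subseteq> G \<inter> \<Inter>{Q \<in> Irr. A \<subseteq> Q}" using AG by auto
    ultimately show ?thesis by (rule subset_antisym[symmetric])
  qed
qed

lemma jpc_L: "join_pseudocomplemented L (\<subseteq>)"
  unfolding join_pseudocomplemented_def
proof (intro ballI)
  fix x assume x: "x \<in> L"
  define y0 where "y0 = \<Inter>{z \<in> L. Irr - x \<subseteq> z}"
  have fam: "E \<in> {z \<in> L. Irr - x \<subseteq> z}" using Ext_L unfolding Irr_def by auto
  have y0L: "y0 \<in> L"
  proof -
    have "y0 \<subseteq> E" using fam unfolding y0_def by blast
    moreover have "G \<in> y0" unfolding y0_def using LG by blast
    moreover have "A \<inter> B \<in> y0" if "A \<in> y0" "B \<in> y0" for A B
      using that unfolding y0_def using LI by blast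
    ultimately show ?thesis by (intro LintroI) auto
  qed
  have y0Irr: "Irr - x \<subseteq> y0" unfolding y0_def by blast
  have Jy: "J y0 x = E"
  proof
    show "J y0 x \<subseteq> E" using LE[OF J_L[OF y0L x]] .
  next
    show "E \<subseteq> J y0 x"
    proof
      fix A assume A: "A \<in> E"
      let ?P = "G \<inter> \<Inter>{Q \<in> Irr - x. A \<subseteq> Q}"
      let ?R = "G \<inter> \<Inter>{Q \<in> Irr \<inter> x. A \<subseteq> Q}"
      have "?P \<in> y0" using L_Inter[OF y0L, of "{Q \<in> Irr - x. A \<subseteq> Q}"] y0Irr by blast
      moreover have "?R \<in> x" using L_Inter[OF x, of "{Q \<in> Irr \<inter> x. A \<subseteq> Q}"] by blast
      moreover have "G \<inter> \<Inter>{Q \<in> Irr. A \<subseteq> Q} = ?P \<inter> ?R" by blast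
      then have "A = ?P \<inter> ?R" using Irr_rep[OF A] by simp
      ultimately show "A \<in> J y0 x" unfolding J_def by blast
    qed
  qed
  have mini: "y0 \<subseteq> z" if z: "z \<in> L" and jz: "J z x = E" for z
  proof -
    have "Irr - x \<subseteq> z"
    proof
      fix Q assume Q: "Q \<in> Irr - x"
      then have "Q \<in> J z x" using jz unfolding Irr_def by auto
      then obtain B C where BC: "B \<in> z" "C \<in> x" "Q = B \<inter> C" unfolding J_def by blast
      have "B \<in> E" "C \<in> E" using BC LE[OF z] LE[OF x] by auto
      moreover have "C \<noteq> Q" using BC Q by auto
      ultimately have "B = Q" using Q BC unfolding Irr_def by blast
      then show "Q \<in> z" using BC by simp
    qed
    then show ?thesis using z unfolding y0_def by blast
  qed
  show "\<exists>y. y \<in> L \<and> ljoin L (\<subseteq>) y x = ltop L (\<subseteq>) \<and>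
          (\<forall>z\<in>L. ljoin L (\<subseteq>) z x = ltop L (\<subseteq>) \<longrightarrow> y \<subseteq> z)"
  proof (intro exI[of _ y0] conjI ballI impI)
    show "y0 \<in> L" by (rule y0L)
    show "ljoin L (\<subseteq>) y0 x = ltop L (\<subseteq>)" using ljoin_J[OF y0L x] Jy ltop_E by simp
  next
    fix z assume z: "z \<in> L" and "ljoin L (\<subseteq>) z x = ltop L (\<subseteq>)"
    then have "J z x = E" using ljoin_J[OF z x] ltop_E by simp
    then show "y0 \<subseteq> z" using mini z by blast
  qed
qed

end

theorem proposition7:
  fixes G :: "'g set" and M :: "'m set" and I :: "('g \<times> 'm) set"
  assumes "formal_context G M I"
  shows "join_semidistributive (downExt G M I) (\<subseteq>)
    \<and> lower_semimodular (downExt G M I) (\<subseteq>)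
    \<and> meet_distributive (downExt G M I) (\<subseteq>)
    \<and> join_pseudocomplemented (downExt G M I) (\<subseteq>)
    \<and> ranked (downExt G M I) (\<subseteq>)
    \<and> atomistic (downExt G M I) (\<subseteq>)"
proof -
  interpret fc G M I by (rule fc.intro) (rule assms)
  show ?thesis using jsd_L lsm_L jpc_L ranked_L atomistic_L
    unfolding meet_distributive_def by blast
qed

end
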